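(* Let $n\ge 3$ and let $F_n^1$, $F_n^2$ be the complex Leibniz algebras on basis $\{e_1,\dots,e_n\}$ with nonzero products $[e_1,e_1]=e_3$, $[e_i,e_1]=e_{i+1}$ ($2\le i\le n-1$) for $F_n^1$, and $[e_1,e_1]=e_3$, $[e_i,e_1]=e_{i+1}$ ($3\le i\le n-1$) for $F_n^2$. Then $\dim\mathrm{Bider}(F_n^1)=2n+1$ and $\dim\mathrm{Bider}(F_n^2)=2n+3$.
   Context: Leibniz algebras are right Leibniz: $[x,[y,z]]=[[x,y],z]-[[x,z],y]$. A derivation is a linear $d$ with $d([x,y])=[d(x),y]+[x,d(y)]$; an anti-derivation is a linear $D$ with $D([x,y])=[D(x),y]-[D(y),x]$; a biderivation is a pair $(d,D)$ of a derivation and an anti-derivation with $[x,d(y)]=[x,D(y)]$ for all $x,y$; $\mathrm{Bider}(L)$ is the complex vector space of all biderivations of $L$. *)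

theory Defs
  imports Complex_Main "HOL-Library.Function_Algebras" "HOL-Library.Product_Plus"
begin

definition vecsp :: "nat \<Rightarrow> (nat \<Rightarrow> complex) set" where
  "vecsp n = {v. \<forall>i. v i \<noteq> 0 \<longrightarrow> i \<in> {1..n}}"

definition e :: "nat \<Rightarrow> nat \<Rightarrow> complex" where
  "e i = (\<lambda>k. if k = i then 1 else 0)"

definition bracket :: "nat \<Rightarrow> (nat \<Rightarrow> nat \<Rightarrow> nat \<Rightarrow> complex)
     \<Rightarrow> (nat \<Rightarrow> complex) \<Rightarrow> (nat \<Rightarrow> complex) \<Rightarrow> (nat \<Rightarrow> complex)" where
  "bracket n c x y = (\<lambda>k. if k \<in> {1..n} then
      (\<Sum>i\<in>{1..n}. \<Sum>j\<in>{1..n}. x i * y j * c i j k) else 0)"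

definition F1 :: "nat \<Rightarrow> nat \<Rightarrow> nat \<Rightarrow> nat \<Rightarrow> complex" where
  "F1 n i j k = (if j = 1 \<and> ((i = 1 \<and> k = 3) \<or> (2 \<le> i \<and> i \<le> n - 1 \<and> k = i + 1)) then 1 else 0)"

definition F2 :: "nat \<Rightarrow> nat \<Rightarrow> nat \<Rightarrow> nat \<Rightarrow> complex" where
  "F2 n i j k = (if j = 1 \<and> ((i = 1 \<and> k = 3) \<or> (3 \<le> i \<and> i \<le> n - 1 \<and> k = i + 1)) then 1 else 0)"

type_synonym endo = "(nat \<Rightarrow> complex) \<Rightarrow> (nat \<Rightarrow> complex)"

text \<open>Complex-linear endomorphism of vecsp n; normalised to be 0 outside vecsp n,
  so that each linear map has a unique representative.\<close>
definition lin_endo :: "nat \<Rightarrow> endo \<Rightarrow> bool" where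
  "lin_endo n f \<longleftrightarrow>
     (\<forall>x\<in>vecsp n. f x \<in> vecsp n) \<and>
     (\<forall>x\<in>vecsp n. \<forall>y\<in>vecsp n. f (x + y) = f x + f y) \<and>
     (\<forall>a. \<forall>x\<in>vecsp n. f (\<lambda>k. a * x k) = (\<lambda>k. a * f x k)) \<and>
     (\<forall>x. x \<notin> vecsp n \<longrightarrow> f x = 0)"

definition is_derivation :: "nat \<Rightarrow> (nat \<Rightarrow> nat \<Rightarrow> nat \<Rightarrow> complex) \<Rightarrow> endo \<Rightarrow> bool" where
  "is_derivation n c d \<longleftrightarrow> lin_endo n d \<and>
     (\<forall>x\<in>vecsp n. \<forall>y\<in>vecsp n.
        d (bracket n c x y) = bracket n c (d x) y + bracket n c x (d y))"

definition is_antiderivation :: "nat \<Rightarrow> (nat \<Rightarrow> nat \<Rightarrow> nat \<Rightarrow> complex) \<Rightarrow> endo \<Rightarrow> bool" where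
  "is_antiderivation n c D \<longleftrightarrow> lin_endo n D \<and>
     (\<forall>x\<in>vecsp n. \<forall>y\<in>vecsp n.
        D (bracket n c x y) = bracket n c (D x) y - bracket n c (D y) x)"

definition Bider :: "nat \<Rightarrow> (nat \<Rightarrow> nat \<Rightarrow> nat \<Rightarrow> complex) \<Rightarrow> (endo \<times> endo) set" where
  "Bider n c = {(d, D). is_derivation n c d \<and> is_antiderivation n c D \<and>
     (\<forall>x\<in>vecsp n. \<forall>y\<in>vecsp n. bracket n c x (d y) = bracket n c x (D y))}"

definition pscale :: "complex \<Rightarrow> endo \<times> endo \<Rightarrow> endo \<times> endo" where
  "pscale a p = ((\<lambda>x k. a * fst p x k), (\<lambda>x k. a * snd p x k))"

definition cdim :: "(endo \<times> endo) set \<Rightarrow> nat" where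
  "cdim S = Vector_Spaces.vector_space.dim pscale S"

end

theory Submission
  imports Defs
begin


lemma sum_fun_apply: "finite A \<Longrightarrow> (sum f A) x = (\<Sum>a\<in>A. f a x)"
  by (induction A rule: finite_induct) auto

interpretation ps: vector_space pscale
  by unfold_locales (auto simp: pscale_def fun_eq_iff algebra_simps prod_eq_iff)

lemma dim_by_coords:
  fixes V :: "(endo \<times> endo) set" and I :: "'i set"
  assumes finI: "finite I"
    and phiV: "\<And>i. i \<in> I \<Longrightarrow> phi i \<in> V"
    and sub: "ps.subspace V"
    and cadd: "\<And>i x y. coord i (x + y) = coord i x + coord i y"
    and cscale: "\<And>i a x. coord i (pscale a x) = a * coord i x"
    and delta: "\<And>i j. i \<in> I \<Longrightarrow> j \<in> I \<Longrightarrow> coord i (phi j) = (if i = j then 1 else 0)"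
    and zero: "\<And>v. v \<in> V \<Longrightarrow> (\<And>i. i \<in> I \<Longrightarrow> coord i v = 0) \<Longrightarrow> v = 0"
  shows "ps.dim V = card I"
proof -
  have c0: "coord i 0 = 0" for i
    using cscale[of i 0 0] by (simp add: pscale_def zero_prod_def zero_fun_def)
  have csum: "coord i (sum g J) = (\<Sum>j\<in>J. coord i (g j))" if "finite J" for i g and J :: "'k set"
    using that by (induction J rule: finite_induct) (auto simp: c0 cadd)
  have inj: "inj_on phi I"
  proof (rule inj_onI)
    fix i j assume ij: "i \<in> I" "j \<in> I" "phi i = phi j"
    show "i = j" using delta[of i i] delta[of i j] ij by (auto split: if_splits)
  qed
  have comb: "coord k (\<Sum>i\<in>J. pscale (u i) (phi i)) = (if k \<in> J then u k else 0)"
    if "k \<in> I" "J \<subseteq> I" for k u J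
  proof -
    have fJ: "finite J" using that finI finite_subset by blast
    have "coord k (\<Sum>i\<in>J. pscale (u i) (phi i)) = (\<Sum>i\<in>J. if i = k then u i else 0)"
      using that by (auto simp: csum[OF fJ] cscale delta intro!: sum.cong)
    also have "\<dots> = (if k \<in> J then u k else 0)"
      using fJ by (simp add: sum.delta')
    finally show ?thesis .
  qed
  have indep: "ps.independent (phi ` I)"
  proof (rule ps.independent_if_scalars_zero)
    show "finite (phi ` I)" using finI by simp
  next
    fix f x assume s: "(\<Sum>x\<in>phi ` I. pscale (f x) x) = 0" and x: "x \<in> phi ` I"
    then obtain k where k: "k \<in> I" "x = phi k" by blast
    have "(\<Sum>i\<in>I. pscale (f (phi i)) (phi i)) = 0"
      using s by (simp add: sum.reindex[OF inj])
    then have "coord k (\<Sum>i\<in>I. pscale (f (phi i)) (phi i)) = 0" by (simp add: c0)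
    then show "f x = 0" using comb[of k I "\<lambda>i. f (phi i)"] k by simp
  qed
  have span: "V \<subseteq> ps.span (phi ` I)"
  proof
    fix v assume v: "v \<in> V"
    define w where "w = (\<Sum>i\<in>I. pscale (coord i v) (phi i))"
    have wV: "w \<in> V" unfolding w_def
      using sub phiV by (intro ps.subspace_sum) (auto intro: ps.subspace_scale)
    have "v - w = 0"
    proof (rule zero)
      show "v - w \<in> V" using ps.subspace_diff[OF sub v wV] .
      fix k assume k: "k \<in> I"
      have "coord k (v - w) + coord k w = coord k v" using cadd[of k "v - w" w] by simp
      moreover have "coord k w = coord k v" using comb[of k I "\<lambda>i. coord i v"] k by (simp add: w_def)
      ultimately show "coord k (v - w) = 0" by simp
    qed
    then have "v = w" by simp
    moreover have "w \<in> ps.span (phi ` I)" unfolding w_def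
      by (intro ps.span_sum ps.span_scale ps.span_base imageI)
    ultimately show "v \<in> ps.span (phi ` I)" by simp
  qed
  have "ps.dim V = card (phi ` I)"
    using ps.dim_unique[OF _ span indep refl] phiV by blast
  then show ?thesis using card_image[OF inj] by simp
qed


definition lm :: "nat \<Rightarrow> (nat \<Rightarrow> nat \<Rightarrow> complex) \<Rightarrow> endo" where
  "lm n A = (\<lambda>x. if x \<in> vecsp n then (\<lambda>k. if k \<in> {1..n} then (\<Sum>j\<in>{1..n}. A k j * x j) else 0) else 0)"

definition mat :: "endo \<Rightarrow> nat \<Rightarrow> nat \<Rightarrow> complex" where
  "mat f = (\<lambda>k j. f (e j) k)"

lemma sum_delta_mult: "finite S \<Longrightarrow> (\<Sum>j\<in>S. f j * (if k = j then 1 else 0)) = (if k \<in> S then f k else (0::complex))"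
proof -
  assume S: "finite S"
  have "(\<Sum>j\<in>S. f j * (if k = j then 1 else 0)) = (\<Sum>j\<in>S. if k = j then f j else 0)"
    by (rule sum.cong) auto
  then show ?thesis using S by (simp add: sum.delta)
qed

lemma sum_delta_mult': "finite S \<Longrightarrow> (\<Sum>j\<in>S. (if j = k then 1 else 0) * f j) = (if k \<in> S then f k else (0::complex))"
proof -
  assume S: "finite S"
  have "(\<Sum>j\<in>S. (if j = k then 1 else 0) * f j) = (\<Sum>j\<in>S. if j = k then f j else 0)"
    by (rule sum.cong) auto
  then show ?thesis using S by (simp add: sum.delta')
qed

lemma vecsp_out: "x \<in> vecsp n \<Longrightarrow> k \<notin> {1..n} \<Longrightarrow> x k = 0"
  unfolding vecsp_def by blast

lemma vecsp_add: assumes "x \<in> vecsp n" "y \<in> vecsp n" shows "x + y \<in> vecsp n"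
proof -
  have "(x+y) i = 0" if "i \<notin> {1..n}" for i
    using vecsp_out[OF assms(1) that] vecsp_out[OF assms(2) that] by simp
  then show ?thesis unfolding vecsp_def by blast
qed

lemma vecsp_scale: "x \<in> vecsp n \<Longrightarrow> (\<lambda>k. a * x k) \<in> vecsp n"
  unfolding vecsp_def by auto

lemma vecsp_zero: "0 \<in> vecsp n"
  unfolding vecsp_def by auto

lemma vecsp_sum: "finite J \<Longrightarrow> (\<And>j. j \<in> J \<Longrightarrow> g j \<in> vecsp n) \<Longrightarrow> sum g J \<in> vecsp n"
  by (induction J rule: finite_induct) (auto simp: vecsp_zero vecsp_add)

lemma e_vecsp: "j \<in> {1..n} \<Longrightarrow> e j \<in> vecsp n"
  unfolding vecsp_def e_def by auto

lemma vecsp_decomp: "x \<in> vecsp n \<Longrightarrow> x = (\<Sum>j\<in>{1..n}. (\<lambda>k. x j * e j k))"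
proof (rule ext)
  fix k assume x: "x \<in> vecsp n"
  have "(\<Sum>j\<in>{1..n}. (\<lambda>k. x j * e j k)) k = (\<Sum>j\<in>{1..n}. x j * (if k = j then 1 else 0))"
    by (simp add: sum_fun_apply e_def)
  also have "\<dots> = x k" using vecsp_out[OF x] by (simp add: sum_delta_mult)
  finally show "x k = (\<Sum>j\<in>{1..n}. (\<lambda>k. x j * e j k)) k" by simp
qed

lemma lin_zero: assumes f: "lin_endo n f" shows "f 0 = 0"
proof -
  have "f (\<lambda>k. 0 * (0::nat\<Rightarrow>complex) k) = (\<lambda>k. 0 * f 0 k)"
    using f vecsp_zero[of n] unfolding lin_endo_def by blast
  moreover have "(\<lambda>k. 0 * (0::nat\<Rightarrow>complex) k) = 0" by (simp add: fun_eq_iff)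
  moreover have "(\<lambda>k. 0 * f 0 k) = (0::nat\<Rightarrow>complex)" by (simp add: fun_eq_iff)
  ultimately show ?thesis by metis
qed

lemma lin_sum: assumes f: "lin_endo n f" and fin: "finite J" and g: "\<And>j. j \<in> J \<Longrightarrow> g j \<in> vecsp n"
  shows "f (sum g J) = (\<Sum>j\<in>J. f (g j))"
  using fin g
proof (induction J rule: finite_induct)
  case empty
  have "f 0 = 0" by (rule lin_zero[OF f])
  then show ?case by (simp add: zero_fun_def)
next
  case (insert a J)
  have "f (sum g (insert a J)) = f (g a + sum g J)" using insert by simp
  also have "\<dots> = f (g a) + f (sum g J)"
    using insert.prems insert.hyps f by (simp add: lin_endo_def vecsp_sum)
  also have "\<dots> = f (g a) + (\<Sum>j\<in>J. f (g j))" using insert by simp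
  finally show ?case using sum.insert[OF insert.hyps(1,2), of "\<lambda>j. f (g j)"] by metis
qed

lemma lin_lm: "lin_endo n f \<Longrightarrow> f = lm n (mat f)"
proof (rule ext)
  fix x assume f: "lin_endo n f"
  show "f x = lm n (mat f) x"
  proof (cases "x \<in> vecsp n")
    case False then show ?thesis using f by (simp add: lin_endo_def lm_def)
  next
    case x: True
    have "f x = f (\<Sum>j\<in>{1..n}. (\<lambda>k. x j * e j k))" using vecsp_decomp[OF x] by simp
    also have "\<dots> = (\<Sum>j\<in>{1..n}. f (\<lambda>k. x j * e j k))"
      by (rule lin_sum[OF f]) (auto intro!: vecsp_scale e_vecsp)
    also have "\<dots> = (\<Sum>j\<in>{1..n}. (\<lambda>k. x j * f (e j) k))"
      using f e_vecsp by (auto simp: lin_endo_def intro!: sum.cong)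
    finally have fx: "f x = (\<Sum>j\<in>{1..n}. (\<lambda>k. x j * f (e j) k))" .
    show ?thesis
    proof (rule ext)
      fix k
      show "f x k = lm n (mat f) x k"
      proof (cases "k \<in> {1..n}")
        case True then show ?thesis using x by (simp add: fx lm_def mat_def sum_fun_apply mult.commute)
      next
        case False
        have "f x \<in> vecsp n" using f x by (simp add: lin_endo_def)
        then show ?thesis using vecsp_out[OF \<open>f x \<in> vecsp n\<close> False] False by (auto simp: lm_def)
      qed
    qed
  qed
qed

lemma lm_vecsp: "lm n A x \<in> vecsp n"
  unfolding vecsp_def lm_def by auto

lemma lm_lin: "lin_endo n (lm n A)"
  unfolding lin_endo_def
proof (intro conjI ballI allI impI)
  fix x y assume x: "x \<in> vecsp n" and y: "y \<in> vecsp n"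
  show "lm n A (x + y) = lm n A x + lm n A y"
    using x y vecsp_add[OF x y] by (auto simp: lm_def fun_eq_iff distrib_left sum.distrib)
next
  fix a x assume x: "x \<in> vecsp n"
  show "lm n A (\<lambda>k. a * x k) = (\<lambda>k. a * lm n A x k)"
    using x vecsp_scale[OF x] by (auto simp: lm_def fun_eq_iff sum_distrib_left mult_ac)
next
  fix x show "lm n A x \<in> vecsp n" by (rule lm_vecsp)
next
  fix x assume "x \<notin> vecsp n" then show "lm n A x = 0" by (simp add: lm_def)
qed

lemma bracket_vecsp: "bracket n c x y \<in> vecsp n"
  unfolding vecsp_def bracket_def by auto

lemma T1: "k \<in> {1..n} \<Longrightarrow> lm n A (bracket n c x y) k =
   (\<Sum>i\<in>{1..n}. \<Sum>j\<in>{1..n}. x i * y j * (\<Sum>m\<in>{1..n}. c i j m * A k m))"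
proof -
  assume k: "k \<in> {1..n}"
  have "lm n A (bracket n c x y) k = (\<Sum>m\<in>{1..n}. A k m * (\<Sum>i\<in>{1..n}. \<Sum>j\<in>{1..n}. x i * y j * c i j m))"
    using k bracket_vecsp by (auto simp: lm_def bracket_def intro!: sum.cong)
  also have "\<dots> = (\<Sum>m\<in>{1..n}. \<Sum>i\<in>{1..n}. \<Sum>j\<in>{1..n}. x i * y j * (c i j m * A k m))"
    by (simp add: sum_distrib_left mult_ac)
  also have "\<dots> = (\<Sum>i\<in>{1..n}. \<Sum>m\<in>{1..n}. \<Sum>j\<in>{1..n}. x i * y j * (c i j m * A k m))"
    by (rule sum.swap)
  also have "\<dots> = (\<Sum>i\<in>{1..n}. \<Sum>j\<in>{1..n}. \<Sum>m\<in>{1..n}. x i * y j * (c i j m * A k m))"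
    by (rule sum.cong[OF refl], rule sum.swap)
  also have "\<dots> = (\<Sum>i\<in>{1..n}. \<Sum>j\<in>{1..n}. x i * y j * (\<Sum>m\<in>{1..n}. c i j m * A k m))"
    by (simp add: sum_distrib_left)
  finally show ?thesis .
qed

lemma T2: "k \<in> {1..n} \<Longrightarrow> x \<in> vecsp n \<Longrightarrow> bracket n c (lm n A x) y k =
   (\<Sum>i\<in>{1..n}. \<Sum>j\<in>{1..n}. x i * y j * (\<Sum>a\<in>{1..n}. A a i * c a j k))"
proof -
  assume k: "k \<in> {1..n}" and x: "x \<in> vecsp n"
  have "bracket n c (lm n A x) y k = (\<Sum>a\<in>{1..n}. \<Sum>j\<in>{1..n}. (\<Sum>i\<in>{1..n}. A a i * x i) * y j * c a j k)"
    using k x by (auto simp: lm_def bracket_def intro!: sum.cong)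
  also have "\<dots> = (\<Sum>a\<in>{1..n}. \<Sum>j\<in>{1..n}. \<Sum>i\<in>{1..n}. x i * y j * (A a i * c a j k))"
    by (simp add: sum_distrib_left sum_distrib_right mult_ac)
  also have "\<dots> = (\<Sum>a\<in>{1..n}. \<Sum>i\<in>{1..n}. \<Sum>j\<in>{1..n}. x i * y j * (A a i * c a j k))"
    by (rule sum.cong[OF refl], rule sum.swap)
  also have "\<dots> = (\<Sum>i\<in>{1..n}. \<Sum>a\<in>{1..n}. \<Sum>j\<in>{1..n}. x i * y j * (A a i * c a j k))"
    by (rule sum.swap)
  also have "\<dots> = (\<Sum>i\<in>{1..n}. \<Sum>j\<in>{1..n}. \<Sum>a\<in>{1..n}. x i * y j * (A a i * c a j k))"
    by (rule sum.cong[OF refl], rule sum.swap)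
  also have "\<dots> = (\<Sum>i\<in>{1..n}. \<Sum>j\<in>{1..n}. x i * y j * (\<Sum>a\<in>{1..n}. A a i * c a j k))"
    by (simp add: sum_distrib_left)
  finally show ?thesis .
qed

lemma T3: "k \<in> {1..n} \<Longrightarrow> y \<in> vecsp n \<Longrightarrow> bracket n c x (lm n A y) k =
   (\<Sum>i\<in>{1..n}. \<Sum>j\<in>{1..n}. x i * y j * (\<Sum>b\<in>{1..n}. A b j * c i b k))"
proof -
  assume k: "k \<in> {1..n}" and y: "y \<in> vecsp n"
  have "bracket n c x (lm n A y) k = (\<Sum>i\<in>{1..n}. \<Sum>b\<in>{1..n}. x i * (\<Sum>j\<in>{1..n}. A b j * y j) * c i b k)"
    using k y by (auto simp: lm_def bracket_def intro!: sum.cong)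
  also have "\<dots> = (\<Sum>i\<in>{1..n}. \<Sum>b\<in>{1..n}. \<Sum>j\<in>{1..n}. x i * y j * (A b j * c i b k))"
    by (simp add: sum_distrib_left sum_distrib_right mult_ac)
  also have "\<dots> = (\<Sum>i\<in>{1..n}. \<Sum>j\<in>{1..n}. \<Sum>b\<in>{1..n}. x i * y j * (A b j * c i b k))"
    by (rule sum.cong[OF refl], rule sum.swap)
  also have "\<dots> = (\<Sum>i\<in>{1..n}. \<Sum>j\<in>{1..n}. x i * y j * (\<Sum>b\<in>{1..n}. A b j * c i b k))"
    by (simp add: sum_distrib_left)
  finally show ?thesis .
qed

lemma T4: "k \<in> {1..n} \<Longrightarrow> y \<in> vecsp n \<Longrightarrow> bracket n c (lm n A y) x k =
   (\<Sum>i\<in>{1..n}. \<Sum>j\<in>{1..n}. x i * y j * (\<Sum>a\<in>{1..n}. A a j * c a i k))"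
proof -
  assume k: "k \<in> {1..n}" and y: "y \<in> vecsp n"
  have "bracket n c (lm n A y) x k = (\<Sum>a\<in>{1..n}. \<Sum>i\<in>{1..n}. (\<Sum>j\<in>{1..n}. A a j * y j) * x i * c a i k)"
    using k y by (auto simp: lm_def bracket_def intro!: sum.cong)
  also have "\<dots> = (\<Sum>a\<in>{1..n}. \<Sum>i\<in>{1..n}. \<Sum>j\<in>{1..n}. x i * y j * (A a j * c a i k))"
    by (simp add: sum_distrib_left sum_distrib_right mult_ac)
  also have "\<dots> = (\<Sum>i\<in>{1..n}. \<Sum>a\<in>{1..n}. \<Sum>j\<in>{1..n}. x i * y j * (A a j * c a i k))"
    by (rule sum.swap)
  also have "\<dots> = (\<Sum>i\<in>{1..n}. \<Sum>j\<in>{1..n}. \<Sum>a\<in>{1..n}. x i * y j * (A a j * c a i k))"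
    by (rule sum.cong[OF refl], rule sum.swap)
  also have "\<dots> = (\<Sum>i\<in>{1..n}. \<Sum>j\<in>{1..n}. x i * y j * (\<Sum>a\<in>{1..n}. A a j * c a i k))"
    by (simp add: sum_distrib_left)
  finally show ?thesis .
qed

lemma unit1: "finite S \<Longrightarrow> j \<in> S \<Longrightarrow> (\<Sum>j'\<in>S. e j j' * g j') = (g j :: complex)"
  unfolding e_def by (simp add: sum_delta_mult')

lemma unit2: "i \<in> {1..n} \<Longrightarrow> j \<in> {1..n} \<Longrightarrow>
   (\<Sum>i'\<in>{1..n}. \<Sum>j'\<in>{1..n}. e i i' * e j j' * P i' j') = (P i j :: complex)"
proof -
  assume i: "i \<in> {1..n}" and j: "j \<in> {1..n}"
  have "(\<Sum>i'\<in>{1..n}. \<Sum>j'\<in>{1..n}. e i i' * e j j' * P i' j') = (\<Sum>i'\<in>{1..n}. e i i' * P i' j)"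
  proof (rule sum.cong[OF refl])
    fix i' assume "i' \<in> {1..n}"
    have "(\<Sum>j'\<in>{1..n}. e i i' * e j j' * P i' j') = (\<Sum>j'\<in>{1..n}. e j j' * (e i i' * P i' j'))"
      by (rule sum.cong[OF refl]) (simp only: mult_ac)
    also have "\<dots> = e i i' * P i' j" by (rule unit1[OF _ j]) simp
    finally show "(\<Sum>j'\<in>{1..n}. e i i' * e j j' * P i' j') = e i i' * P i' j" .
  qed
  also have "\<dots> = P i j" using i by (simp add: unit1)
  finally show ?thesis .
qed


lemma bil_iff:
  fixes L R :: "(nat \<Rightarrow> complex) \<Rightarrow> (nat \<Rightarrow> complex) \<Rightarrow> (nat \<Rightarrow> complex)"
  assumes L: "\<And>x y k. x \<in> vecsp n \<Longrightarrow> y \<in> vecsp n \<Longrightarrow> k \<in> {1..n} \<Longrightarrow>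
        L x y k = (\<Sum>i\<in>{1..n}. \<Sum>j\<in>{1..n}. x i * y j * P i j k)"
    and R: "\<And>x y k. x \<in> vecsp n \<Longrightarrow> y \<in> vecsp n \<Longrightarrow> k \<in> {1..n} \<Longrightarrow>
        R x y k = (\<Sum>i\<in>{1..n}. \<Sum>j\<in>{1..n}. x i * y j * Q i j k)"
    and out: "\<And>x y k. k \<notin> {1..n} \<Longrightarrow> L x y k = R x y k"
  shows "(\<forall>x\<in>vecsp n. \<forall>y\<in>vecsp n. L x y = R x y) \<longleftrightarrow>
         (\<forall>i\<in>{1..n}. \<forall>j\<in>{1..n}. \<forall>k\<in>{1..n}. P i j k = Q i j k)"
proof
  assume H: "\<forall>x\<in>vecsp n. \<forall>y\<in>vecsp n. L x y = R x y"
  show "\<forall>i\<in>{1..n}. \<forall>j\<in>{1..n}. \<forall>k\<in>{1..n}. P i j k = Q i j k"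
  proof (intro ballI)
    fix i j k assume i: "i \<in> {1..n}" and j: "j \<in> {1..n}" and k: "k \<in> {1..n}"
    have "L (e i) (e j) k = R (e i) (e j) k" using H e_vecsp[OF i] e_vecsp[OF j] by simp
    moreover have "L (e i) (e j) k = P i j k"
      by (rule trans[OF L[OF e_vecsp[OF i] e_vecsp[OF j] k] unit2[OF i j]])
    moreover have "R (e i) (e j) k = Q i j k"
      by (rule trans[OF R[OF e_vecsp[OF i] e_vecsp[OF j] k] unit2[OF i j]])
    ultimately show "P i j k = Q i j k" by simp
  qed
next
  assume H: "\<forall>i\<in>{1..n}. \<forall>j\<in>{1..n}. \<forall>k\<in>{1..n}. P i j k = Q i j k"
  show "\<forall>x\<in>vecsp n. \<forall>y\<in>vecsp n. L x y = R x y"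
  proof (intro ballI ext)
    fix x y k assume x: "x \<in> vecsp n" and y: "y \<in> vecsp n"
    show "L x y k = R x y k"
    proof (cases "k \<in> {1..n}")
      case True then show ?thesis using L[OF x y True] R[OF x y True] H by simp
    next
      case False then show ?thesis by (rule out)
    qed
  qed
qed

definition eqs :: "nat \<Rightarrow> (nat \<Rightarrow> nat \<Rightarrow> nat \<Rightarrow> complex) \<Rightarrow> (nat \<Rightarrow> nat \<Rightarrow> complex) \<Rightarrow> (nat \<Rightarrow> nat \<Rightarrow> complex) \<Rightarrow> bool" where
  "eqs n c A B \<longleftrightarrow> (\<forall>i\<in>{1..n}. \<forall>j\<in>{1..n}. \<forall>k\<in>{1..n}.
     (\<Sum>m\<in>{1..n}. c i j m * A k m) = (\<Sum>a\<in>{1..n}. A a i * c a j k) + (\<Sum>b\<in>{1..n}. A b j * c i b k) \<and>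
     (\<Sum>m\<in>{1..n}. c i j m * B k m) = (\<Sum>a\<in>{1..n}. B a i * c a j k) - (\<Sum>a\<in>{1..n}. B a j * c a i k) \<and>
     (\<Sum>b\<in>{1..n}. A b j * c i b k) = (\<Sum>b\<in>{1..n}. B b j * c i b k))"

lemma bracket_out: "k \<notin> {1..n} \<Longrightarrow> bracket n c x y k = 0"
  by (auto simp: bracket_def)

lemma lm_out: "k \<notin> {1..n} \<Longrightarrow> lm n A x k = 0"
  by (auto simp: lm_def)

lemma der_iff: "(\<forall>x\<in>vecsp n. \<forall>y\<in>vecsp n.
        lm n A (bracket n c x y) = bracket n c (lm n A x) y + bracket n c x (lm n A y)) \<longleftrightarrow>
     (\<forall>i\<in>{1..n}. \<forall>j\<in>{1..n}. \<forall>k\<in>{1..n}.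
        (\<Sum>m\<in>{1..n}. c i j m * A k m) = (\<Sum>a\<in>{1..n}. A a i * c a j k) + (\<Sum>b\<in>{1..n}. A b j * c i b k))"
  apply (rule bil_iff)
  subgoal for x y k by (rule T1)
  subgoal for x y k
  proof -
    assume x: "x \<in> vecsp n" and y: "y \<in> vecsp n" and k: "k \<in> {1..n}"
    have "(bracket n c (lm n A x) y + bracket n c x (lm n A y)) k = bracket n c (lm n A x) y k + bracket n c x (lm n A y) k"
      by simp
    also have "\<dots> = (\<Sum>i\<in>{1..n}. \<Sum>j\<in>{1..n}. x i * y j * (\<Sum>a\<in>{1..n}. A a i * c a j k)) +
        (\<Sum>i\<in>{1..n}. \<Sum>j\<in>{1..n}. x i * y j * (\<Sum>b\<in>{1..n}. A b j * c i b k))"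
      by (simp only: T2[OF k x] T3[OF k y])
    also have "\<dots> = (\<Sum>i\<in>{1..n}. \<Sum>j\<in>{1..n}. x i * y j * ((\<Sum>a\<in>{1..n}. A a i * c a j k) + (\<Sum>b\<in>{1..n}. A b j * c i b k)))"
      by (simp only: distrib_left sum.distrib)
    finally show ?thesis .
  qed
  subgoal for x y k by (simp add: lm_out bracket_out)
  done

lemma anti_iff: "(\<forall>x\<in>vecsp n. \<forall>y\<in>vecsp n.
        lm n B (bracket n c x y) = bracket n c (lm n B x) y - bracket n c (lm n B y) x) \<longleftrightarrow>
     (\<forall>i\<in>{1..n}. \<forall>j\<in>{1..n}. \<forall>k\<in>{1..n}.
        (\<Sum>m\<in>{1..n}. c i j m * B k m) = (\<Sum>a\<in>{1..n}. B a i * c a j k) - (\<Sum>a\<in>{1..n}. B a j * c a i k))"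
  apply (rule bil_iff)
  subgoal for x y k by (rule T1)
  subgoal for x y k
  proof -
    assume x: "x \<in> vecsp n" and y: "y \<in> vecsp n" and k: "k \<in> {1..n}"
    have "(bracket n c (lm n B x) y - bracket n c (lm n B y) x) k = bracket n c (lm n B x) y k - bracket n c (lm n B y) x k"
      by simp
    also have "\<dots> = (\<Sum>i\<in>{1..n}. \<Sum>j\<in>{1..n}. x i * y j * (\<Sum>a\<in>{1..n}. B a i * c a j k)) -
        (\<Sum>i\<in>{1..n}. \<Sum>j\<in>{1..n}. x i * y j * (\<Sum>a\<in>{1..n}. B a j * c a i k))"
      by (simp only: T2[OF k x] T4[OF k y])
    also have "\<dots> = (\<Sum>i\<in>{1..n}. \<Sum>j\<in>{1..n}. x i * y j * ((\<Sum>a\<in>{1..n}. B a i * c a j k) - (\<Sum>a\<in>{1..n}. B a j * c a i k)))"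
      by (simp only: right_diff_distrib sum_subtractf)
    finally show ?thesis .
  qed
  subgoal for x y k by (simp add: lm_out bracket_out)
  done

lemma bi_iff: "(\<forall>x\<in>vecsp n. \<forall>y\<in>vecsp n.
        bracket n c x (lm n A y) = bracket n c x (lm n B y)) \<longleftrightarrow>
     (\<forall>i\<in>{1..n}. \<forall>j\<in>{1..n}. \<forall>k\<in>{1..n}.
        (\<Sum>b\<in>{1..n}. A b j * c i b k) = (\<Sum>b\<in>{1..n}. B b j * c i b k))"
  apply (rule bil_iff)
  subgoal for x y k by (rule T3)
  subgoal for x y k by (rule T3)
  subgoal for x y k by (simp add: bracket_out)
  done




definition rho :: "nat \<Rightarrow> nat" where "rho i = (if i = 1 then 3 else i + 1)"

definition cg :: "nat \<Rightarrow> bool \<Rightarrow> nat \<Rightarrow> nat \<Rightarrow> nat \<Rightarrow> complex" where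
  "cg n b i j m = (if j = 1 \<and> 1 \<le> i \<and> i \<le> n - 1 \<and> (b \<or> i \<noteq> 2) \<and> m = rho i then 1 else 0)"

lemma F1_cg: "3 \<le> n \<Longrightarrow> F1 n = cg n True"
  by (auto simp: fun_eq_iff F1_def cg_def rho_def)

lemma F2_cg: "3 \<le> n \<Longrightarrow> F2 n = cg n False"
  by (auto simp: fun_eq_iff F2_def cg_def rho_def)

lemma sum_if_eq: "finite S \<Longrightarrow> (\<Sum>a\<in>S. if a = t \<and> P then f a else 0) = (if t \<in> S \<and> P then f t else (0::complex))"
  by (cases P) (simp_all add: sum.delta')

definition Lg :: "nat \<Rightarrow> bool \<Rightarrow> (nat \<Rightarrow> nat \<Rightarrow> complex) \<Rightarrow> nat \<Rightarrow> nat \<Rightarrow> complex" where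
  "Lg n b A k i = (if k = 3 then A 1 i + (if b then A 2 i else 0) else if 4 \<le> k \<and> k \<le> n then A (k - 1) i else 0)"

lemma S1: assumes "3 \<le> n" shows
  "(\<Sum>m\<in>{1..n}. cg n b i j m * A k m) = (if j = 1 \<and> 1 \<le> i \<and> i \<le> n - 1 \<and> (b \<or> i \<noteq> 2) then A k (rho i) else 0)"
proof -
  have "(\<Sum>m\<in>{1..n}. cg n b i j m * A k m) = (\<Sum>m\<in>{1..n}. if m = rho i \<and> (j = 1 \<and> 1 \<le> i \<and> i \<le> n - 1 \<and> (b \<or> i \<noteq> 2)) then A k m else 0)"
    by (rule sum.cong) (auto simp: cg_def)
  also have "\<dots> = (if j = 1 \<and> 1 \<le> i \<and> i \<le> n - 1 \<and> (b \<or> i \<noteq> 2) then A k (rho i) else 0)"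
    using assms by (auto simp: sum_if_eq rho_def)
  finally show ?thesis .
qed

lemma S2: assumes "3 \<le> n" "k \<in> {1..n}" shows
  "(\<Sum>a\<in>{1..n}. A a i * cg n b a j k) = (if j = 1 then Lg n b A k i else 0)"
proof -
  have "(\<Sum>a\<in>{1..n}. A a i * cg n b a j k) = (\<Sum>a\<in>{1..n}.
      (if a = 1 \<and> (j = 1 \<and> k = 3) then A a i else 0) + (if a = 2 \<and> (j = 1 \<and> k = 3 \<and> b) then A a i else 0)
      + (if a = k - 1 \<and> (j = 1 \<and> 4 \<le> k \<and> k \<le> n) then A a i else 0))"
  proof (rule sum.cong[OF refl])
    fix a assume a: "a \<in> {1..n}"
    consider "a = 1" | "a = 2" | "3 \<le> a" using a by force
    then show "A a i * cg n b a j k = (if a = 1 \<and> (j = 1 \<and> k = 3) then A a i else 0) + (if a = 2 \<and> (j = 1 \<and> k = 3 \<and> b) then A a i else 0)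
      + (if a = k - 1 \<and> (j = 1 \<and> 4 \<le> k \<and> k \<le> n) then A a i else 0)"
    proof cases
      case 1 then show ?thesis using assms by (auto simp: cg_def rho_def)
    next
      case 2 then show ?thesis using assms by (auto simp: cg_def rho_def)
    next
      case 3
      have "(a \<le> n - 1 \<and> k = a + 1) \<longleftrightarrow> (a = k - 1 \<and> 4 \<le> k \<and> k \<le> n)" using 3 assms by arith
      then show ?thesis using 3 by (simp add: cg_def rho_def)
    qed
  qed
  also have "\<dots> = (if j = 1 then Lg n b A k i else 0)"
    using assms by (auto simp: sum.distrib sum_if_eq Lg_def)
  finally show ?thesis .
qed

lemma S3: assumes "3 \<le> n" shows
  "(\<Sum>a\<in>{1..n}. A a j * cg n b i a k) = (if 1 \<le> i \<and> i \<le> n - 1 \<and> (b \<or> i \<noteq> 2) \<and> k = rho i then A 1 j else 0)"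
proof -
  have "(\<Sum>a\<in>{1..n}. A a j * cg n b i a k) = (\<Sum>a\<in>{1..n}. if a = 1 \<and> (1 \<le> i \<and> i \<le> n - 1 \<and> (b \<or> i \<noteq> 2) \<and> k = rho i) then A a j else 0)"
    by (rule sum.cong) (auto simp: cg_def)
  also have "\<dots> = (if 1 \<le> i \<and> i \<le> n - 1 \<and> (b \<or> i \<noteq> 2) \<and> k = rho i then A 1 j else 0)"
    using assms by (auto simp: sum_if_eq)
  finally show ?thesis .
qed

definition ex :: "nat \<Rightarrow> bool \<Rightarrow> (nat \<Rightarrow> nat \<Rightarrow> complex) \<Rightarrow> (nat \<Rightarrow> nat \<Rightarrow> complex) \<Rightarrow> bool" where
  "ex n b A B \<longleftrightarrow> (\<forall>i\<in>{1..n}. \<forall>j\<in>{1..n}. \<forall>k\<in>{1..n}.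
     (if j = 1 \<and> 1 \<le> i \<and> i \<le> n - 1 \<and> (b \<or> i \<noteq> 2) then A k (rho i) else 0) =
        (if j = 1 then Lg n b A k i else 0) + (if 1 \<le> i \<and> i \<le> n - 1 \<and> (b \<or> i \<noteq> 2) \<and> k = rho i then A 1 j else 0) \<and>
     (if j = 1 \<and> 1 \<le> i \<and> i \<le> n - 1 \<and> (b \<or> i \<noteq> 2) then B k (rho i) else 0) =
        (if j = 1 then Lg n b B k i else 0) - (if i = 1 then Lg n b B k j else 0) \<and>
     (if 1 \<le> i \<and> i \<le> n - 1 \<and> (b \<or> i \<noteq> 2) \<and> k = rho i then A 1 j else 0) =
        (if 1 \<le> i \<and> i \<le> n - 1 \<and> (b \<or> i \<noteq> 2) \<and> k = rho i then B 1 j else 0))"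

lemma eqs_ex: assumes n: "3 \<le> n" shows "eqs n (cg n b) A B \<longleftrightarrow> ex n b A B"
  unfolding eqs_def ex_def
  apply (intro ball_cong refl)
  apply (simp only: S1[OF n] S2[OF n] S3[OF n])
  done


lemma Bider_char: "(d, D) \<in> Bider n c \<longleftrightarrow> (\<exists>A B. d = lm n A \<and> D = lm n B \<and> eqs n c A B)"
proof
  assume H: "(d, D) \<in> Bider n c"
  then have ld: "lin_endo n d" and lD: "lin_endo n D"
    and c1: "\<forall>x\<in>vecsp n. \<forall>y\<in>vecsp n. d (bracket n c x y) = bracket n c (d x) y + bracket n c x (d y)"
    and c2: "\<forall>x\<in>vecsp n. \<forall>y\<in>vecsp n. D (bracket n c x y) = bracket n c (D x) y - bracket n c (D y) x"
    and c3: "\<forall>x\<in>vecsp n. \<forall>y\<in>vecsp n. bracket n c x (d y) = bracket n c x (D y)"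
    by (auto simp: Bider_def is_derivation_def is_antiderivation_def)
  obtain A where d: "d = lm n A" using lin_lm[OF ld] by blast
  obtain B where D: "D = lm n B" using lin_lm[OF lD] by blast
  have e1: "\<forall>x\<in>vecsp n. \<forall>y\<in>vecsp n. lm n A (bracket n c x y) = bracket n c (lm n A x) y + bracket n c x (lm n A y)"
    using c1 by (simp only: d)
  have e2: "\<forall>x\<in>vecsp n. \<forall>y\<in>vecsp n. lm n B (bracket n c x y) = bracket n c (lm n B x) y - bracket n c (lm n B y) x"
    using c2 by (simp only: D)
  have e3: "\<forall>x\<in>vecsp n. \<forall>y\<in>vecsp n. bracket n c x (lm n A y) = bracket n c x (lm n B y)"
    using c3 by (simp only: d D)
  have "eqs n c A B"
    unfolding eqs_def
    using der_iff[THEN iffD1, OF e1] anti_iff[THEN iffD1, OF e2] bi_iff[THEN iffD1, OF e3]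
    by blast
  then show "\<exists>A B. d = lm n A \<and> D = lm n B \<and> eqs n c A B" using d D by blast
next
  assume "\<exists>A B. d = lm n A \<and> D = lm n B \<and> eqs n c A B"
  then obtain A B where d: "d = lm n A" and D: "D = lm n B" and E: "eqs n c A B" by blast
  have e1: "\<forall>x\<in>vecsp n. \<forall>y\<in>vecsp n. lm n A (bracket n c x y) = bracket n c (lm n A x) y + bracket n c x (lm n A y)"
    by (rule der_iff[THEN iffD2]) (use E in \<open>unfold eqs_def, blast\<close>)
  have e2: "\<forall>x\<in>vecsp n. \<forall>y\<in>vecsp n. lm n B (bracket n c x y) = bracket n c (lm n B x) y - bracket n c (lm n B y) x"
    by (rule anti_iff[THEN iffD2]) (use E in \<open>unfold eqs_def, blast\<close>)
  have e3: "\<forall>x\<in>vecsp n. \<forall>y\<in>vecsp n. bracket n c x (lm n A y) = bracket n c x (lm n B y)"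
    by (rule bi_iff[THEN iffD2]) (use E in \<open>unfold eqs_def, blast\<close>)
  have h1: "is_derivation n c (lm n A)" unfolding is_derivation_def by (rule conjI[OF lm_lin e1])
  have h2: "is_antiderivation n c (lm n B)" unfolding is_antiderivation_def by (rule conjI[OF lm_lin e2])
  show "(d, D) \<in> Bider n c"
    unfolding Bider_def d D by (rule CollectI, simp only: case_prod_conv, intro conjI h1 h2 e3)
qed


lemma lm_zero: "lm n (\<lambda>k j. 0) = 0"
  by (auto simp: lm_def fun_eq_iff)

lemma lm_add: "lm n A + lm n A' = lm n (\<lambda>k j. A k j + A' k j)"
  by (auto simp: lm_def fun_eq_iff distrib_right sum.distrib)

lemma lm_scale: "(\<lambda>x k. a * lm n A x k) = lm n (\<lambda>k j. a * A k j)"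
  by (auto simp: lm_def fun_eq_iff sum_distrib_left mult_ac)

lemma eqs_zero: "eqs n c (\<lambda>k j. 0) (\<lambda>k j. 0)"
  by (simp add: eqs_def)

lemma eqs_add: "eqs n c A B \<Longrightarrow> eqs n c A' B' \<Longrightarrow> eqs n c (\<lambda>k j. A k j + A' k j) (\<lambda>k j. B k j + B' k j)"
  unfolding eqs_def by (simp add: distrib_left distrib_right sum.distrib)

lemma sum_sc1: "(\<Sum>x\<in>S. f x * (a * g x)) = a * (\<Sum>x\<in>S. f x * g x :: complex)"
  by (simp add: sum_distrib_left mult_ac)

lemma sum_sc2: "(\<Sum>x\<in>S. (a * g x) * f x) = a * (\<Sum>x\<in>S. g x * f x :: complex)"
  by (simp add: sum_distrib_left mult_ac)

lemma eqs_scale: "eqs n c A B \<Longrightarrow> eqs n c (\<lambda>k j. a * A k j) (\<lambda>k j. a * B k j)"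
  unfolding eqs_def by (simp only: sum_sc1 sum_sc2 distrib_left[symmetric] right_diff_distrib[symmetric]) simp

lemma Bider_subspace: "ps.subspace (Bider n c)"
proof (rule ps.subspaceI)
  show "0 \<in> Bider n c"
    using Bider_char[of 0 0 n c] eqs_zero[of n c] lm_zero[of n] by (auto simp: zero_prod_def)
next
  fix x y assume x: "x \<in> Bider n c" and y: "y \<in> Bider n c"
  from x have "(fst x, snd x) \<in> Bider n c" by simp
  then obtain A B where xA0: "fst x = lm n A" "snd x = lm n B" and E: "eqs n c A B"
    using Bider_char by blast
  then have xA: "x = (lm n A, lm n B)" by (simp add: prod_eq_iff)
  from y have "(fst y, snd y) \<in> Bider n c" by simp
  then obtain A' B' where yA0: "fst y = lm n A'" "snd y = lm n B'" and E': "eqs n c A' B'"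
    using Bider_char by blast
  then have yA: "y = (lm n A', lm n B')" by (simp add: prod_eq_iff)
  have "x + y = (lm n (\<lambda>k j. A k j + A' k j), lm n (\<lambda>k j. B k j + B' k j))"
    by (simp add: xA yA lm_add)
  then show "x + y \<in> Bider n c" using Bider_char eqs_add[OF E E'] by auto
next
  fix a x assume x: "x \<in> Bider n c"
  from x have "(fst x, snd x) \<in> Bider n c" by simp
  then obtain A B where xA0: "fst x = lm n A" "snd x = lm n B" and E: "eqs n c A B"
    using Bider_char by blast
  then have xA: "x = (lm n A, lm n B)" by (simp add: prod_eq_iff)
  have "pscale a x = (lm n (\<lambda>k j. a * A k j), lm n (\<lambda>k j. a * B k j))"
    by (simp add: xA pscale_def lm_scale)
  then show "pscale a x \<in> Bider n c" using Bider_char eqs_scale[OF E, of a] by auto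
qed

lemma sum_delta_mult2: "finite S \<Longrightarrow> (\<Sum>j\<in>S. f j * (if j = k then 1 else 0)) = (if k \<in> S then f k else (0::complex))"
proof -
  assume S: "finite S"
  have "(\<Sum>j\<in>S. f j * (if j = k then 1 else 0)) = (\<Sum>j\<in>S. if j = k then f j else 0)"
    by (rule sum.cong) auto
  then show ?thesis using S by (simp add: sum.delta')
qed

lemma lm_entry: "r \<in> {1..n} \<Longrightarrow> c \<in> {1..n} \<Longrightarrow> lm n A (e c) r = A r c"
  using e_vecsp[of c n] by (simp add: lm_def e_def sum_delta_mult2)

lemma lm_eq_zero: "(\<And>r c. r \<in> {1..n} \<Longrightarrow> c \<in> {1..n} \<Longrightarrow> A r c = 0) \<Longrightarrow> lm n A = 0"
  by (auto simp: lm_def fun_eq_iff)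

definition coordf :: "bool \<times> nat \<times> nat \<Rightarrow> endo \<times> endo \<Rightarrow> complex" where
  "coordf p v = (if fst p then snd v else fst v) (e (snd (snd p))) (fst (snd p))"

lemma coordf_add: "coordf p (x + y) = coordf p x + coordf p y"
  by (simp add: coordf_def)

lemma coordf_scale: "coordf p (pscale a x) = a * coordf p x"
  by (simp add: coordf_def pscale_def)

lemma coordf_lm: "r \<in> {1..n} \<Longrightarrow> c \<in> {1..n} \<Longrightarrow> coordf (s, r, c) (lm n A, lm n B) = (if s then B r c else A r c)"
  by (simp add: coordf_def lm_entry)



lemma exD: assumes "ex n b A B" "i \<in> {1..n}" "j \<in> {1..n}" "k \<in> {1..n}"
  shows "(if j = 1 \<and> 1 \<le> i \<and> i \<le> n - 1 \<and> (b \<or> i \<noteq> 2) then A k (rho i) else 0) =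
        (if j = 1 then Lg n b A k i else 0) + (if 1 \<le> i \<and> i \<le> n - 1 \<and> (b \<or> i \<noteq> 2) \<and> k = rho i then A 1 j else 0)"
    and "(if j = 1 \<and> 1 \<le> i \<and> i \<le> n - 1 \<and> (b \<or> i \<noteq> 2) then B k (rho i) else 0) =
        (if j = 1 then Lg n b B k i else 0) - (if i = 1 then Lg n b B k j else 0)"
    and "(if 1 \<le> i \<and> i \<le> n - 1 \<and> (b \<or> i \<noteq> 2) \<and> k = rho i then A 1 j else 0) =
        (if 1 \<le> i \<and> i \<le> n - 1 \<and> (b \<or> i \<noteq> 2) \<and> k = rho i then B 1 j else 0)"
  using assms unfolding ex_def by blast+

lemma zero1:
  assumes n: "3 \<le> n" and E: "ex n True A B"
    and c1: "A 1 1 = 0" and c2: "\<And>m. m \<in> {1..n} \<Longrightarrow> A n m = 0"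
    and c3: "\<And>a. a \<in> {2..n} \<Longrightarrow> B a 1 = 0" and c4: "B n 2 = 0"
  shows "\<forall>r\<in>{1..n}. \<forall>c\<in>{1..n}. A r c = 0 \<and> B r c = 0"
proof -
  have n1: "1 \<in> {1..n}" "3 \<in> {1..n}" "n \<in> {1..n}" using n by auto
  have s1: "A 1 j = 0" if "j \<in> {1..n}" for j
  proof (cases "j = 1")
    case True then show ?thesis using c1 by auto
  next
    case False
    then show ?thesis using exD(1)[OF E n1(1) that n1(2)] n by (auto simp: rho_def split: if_splits)
  qed
  have s2: "B 1 j = 0" if "j \<in> {1..n}" for j
    using exD(3)[OF E n1(1) that n1(2)] n s1[OF that] by (auto simp: rho_def split: if_splits)
  have s3: "Lg n True B k j = 0" if "j \<in> {2..n}" "k \<in> {1..n}" for j k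
    using exD(2)[OF E n1(1) _ that(2), of j] that by auto
  have s3a: "B 2 j = 0" if "j \<in> {2..n}" for j
    using s3[OF that n1(2)] s2[of j] that by (auto simp: Lg_def)
  have s3b: "B a j = 0" if "j \<in> {2..n}" "a \<in> {3..n-1}" for j a
    using s3[OF that(1), of "a+1"] that by (auto simp: Lg_def)
  have s4: "B k (i+1) = 0" if "i \<in> {2..n-1}" "k \<in> {1..n}" for k i
  proof -
    have i: "i \<in> {1..n}" "i \<in> {2..n}" using that by auto
    have r: "rho i = i + 1" using that by (auto simp: rho_def)
    show ?thesis using exD(2)[OF E i(1) n1(1) that(2)] s3[OF i(2) that(2)] that r by (auto split: if_splits)
  qed
  have B0: "B r c = 0" if "r \<in> {1..n}" "c \<in> {1..n}" for r c
  proof -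
    have "c = 1 \<or> c = 2 \<or> c \<in> {3..n}" using that(2) by auto
    then consider "c = 1" | "c = 2" | "c \<in> {3..n}" by blast
    then show ?thesis
    proof cases
      case 1 then show ?thesis using c3[of r] s2[of 1] that by (cases "r = 1") auto
    next
      case 2
      have "r = 1 \<or> r = 2 \<or> r \<in> {3..n-1} \<or> r = n" using that(1) by auto
      then consider "r = 1" | "r = 2" | "r \<in> {3..n-1}" | "r = n" by blast
      then show ?thesis
      proof cases
        case 1 then show ?thesis using s2 2 that by auto
      next
        case 2 then show ?thesis using s3a[of c] \<open>c = 2\<close> n by auto
      next
        case 3 then show ?thesis using s3b[of c r] \<open>c = 2\<close> n by auto
      next
        case 4 then show ?thesis using c4 \<open>c = 2\<close> by auto
      qed
    next
      case 3
      define i where "i = c - 1"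
      have ci: "c = i + 1" "i \<in> {2..n-1}" using 3 by (auto simp: i_def)
      show ?thesis using s4[OF ci(2) that(1)] ci(1) by auto
    qed
  qed
  have s5: "A k (rho i) = Lg n True A k i" if "i \<in> {1..n-1}" "k \<in> {1..n}" for i k
  proof -
    have i: "i \<in> {1..n}" using that by auto
    show ?thesis using exD(1)[OF E i n1(1) that(2)] that c1 by (auto split: if_splits)
  qed
  have s6: "Lg n True A k n = 0" if "k \<in> {1..n}" for k
    using exD(1)[OF E n1(3) n1(1) that] n by (auto split: if_splits)
  have s7: "A r n = 0" if "r \<in> {3..n-1}" for r
    using s6[of "r+1"] that by (auto simp: Lg_def)
  have s8: "A r c = A (r+1) (c+1)" if "r \<in> {3..n-1}" "c \<in> {2..n-1}" for r c
  proof -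
    have "A (r+1) (rho c) = Lg n True A (r+1) c" using s5[of c "r+1"] that by auto
    moreover have "rho c = c + 1" using that by (auto simp: rho_def)
    moreover have "Lg n True A (r+1) c = A r c" using that by (auto simp: Lg_def)
    ultimately show ?thesis by simp
  qed
  have s9: "d \<le> n - 3 \<longrightarrow> (\<forall>c\<in>{2..n}. A (n - d) c = 0)" for d
  proof (induction d)
    case 0 then show ?case using c2 by auto
  next
    case (Suc d)
    show ?case
    proof (intro impI ballI)
      fix c assume d: "Suc d \<le> n - 3" and c: "c \<in> {2..n}"
      have r: "n - Suc d \<in> {3..n-1}" using d n by auto
      have r1: "n - Suc d + 1 = n - d" using d n by auto
      show "A (n - Suc d) c = 0"
      proof (cases "c = n")
        case True then show ?thesis using s7[OF r] by auto
      next
        case False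
        then have "c \<in> {2..n-1}" using c by auto
        then have "A (n - Suc d) c = A (n - d) (c + 1)" using s8[OF r] r1 by auto
        also have "\<dots> = 0" using Suc.IH d False c by auto
        finally show ?thesis .
      qed
    qed
  qed
  have s9': "A r c = 0" if "r \<in> {3..n}" "c \<in> {2..n}" for r c
    using s9[of "n - r"] that by auto
  have s10: "A r 1 = A r 2" if "r \<in> {3..n-1}" for r
  proof -
    have "A (r+1) 3 = Lg n True A (r+1) 1" using s5[of 1 "r+1"] that n by (auto simp: rho_def)
    moreover have "A (r+1) 3 = Lg n True A (r+1) 2" using s5[of 2 "r+1"] that n by (auto simp: rho_def)
    moreover have "Lg n True A (r+1) 1 = A r 1" "Lg n True A (r+1) 2 = A r 2" using that by (auto simp: Lg_def)
    ultimately show ?thesis by simp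
  qed
  have s11: "A 2 i = 0" if "i \<in> {1..n}" for i
  proof (cases "i = n")
    case True then show ?thesis using s6[OF n1(2)] s1[OF n1(3)] by (auto simp: Lg_def)
  next
    case False
    then have i: "i \<in> {1..n-1}" using that by auto
    have "rho i \<in> {2..n}" using i n by (auto simp: rho_def)
    then have "A 3 (rho i) = 0" using s9' n by auto
    then show ?thesis using s5[OF i n1(2)] s1[OF that] by (auto simp: Lg_def)
  qed
  have A0: "A r c = 0" if "r \<in> {1..n}" "c \<in> {1..n}" for r c
  proof -
    have "r = 1 \<or> r = 2 \<or> r \<in> {3..n-1} \<or> r = n" using that(1) by auto
    then consider "r = 1" | "r = 2" | "r \<in> {3..n-1}" | "r = n" by blast
    then show ?thesis
    proof cases
      case 1 then show ?thesis using s1 that by auto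
    next
      case 2 then show ?thesis using s11 that by auto
    next
      case 3
      show ?thesis
      proof (cases "c = 1")
        case True then show ?thesis using s10[OF 3] s9'[of r 2] 3 n by auto
      next
        case False then show ?thesis using s9'[of r c] 3 that by auto
      qed
    next
      case 4 then show ?thesis using c2 that by auto
    qed
  qed
  show ?thesis using A0 B0 by blast
qed


lemma zero2:
  assumes n: "3 \<le> n" and E: "ex n False A B"
    and c1: "A 1 1 = 0" "A 2 1 = 0" "A 2 2 = 0" and c2: "\<And>m. m \<in> {1..n-1} \<Longrightarrow> A n m = 0"
    and c3: "\<And>a. a \<in> {2..n} \<Longrightarrow> B a 1 = 0" and c4: "B n 2 = 0" "B 2 2 = 0"
  shows "\<forall>r\<in>{1..n}. \<forall>c\<in>{1..n}. A r c = 0 \<and> B r c = 0"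
proof -
  have n1: "1 \<in> {1..n}" "3 \<in> {1..n}" "n \<in> {1..n}" "2 \<in> {1..n}" using n by auto
  have s1: "A 1 j = 0" if "j \<in> {1..n}" for j
  proof (cases "j = 1")
    case True then show ?thesis using c1 by auto
  next
    case False
    then show ?thesis using exD(1)[OF E n1(1) that n1(2)] n by (auto simp: rho_def split: if_splits)
  qed
  have s2: "B 1 j = 0" if "j \<in> {1..n}" for j
    using exD(3)[OF E n1(1) that n1(2)] n s1[OF that] by (auto simp: rho_def split: if_splits)
  have s3: "Lg n False B k j = 0" if "j \<in> {2..n}" "k \<in> {1..n}" for j k
    using exD(2)[OF E n1(1) _ that(2), of j] that by auto
  have s3b: "B a j = 0" if "j \<in> {2..n}" "a \<in> {3..n-1}" for j a
    using s3[OF that(1), of "a+1"] that by (auto simp: Lg_def)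
  have s4: "B k (i+1) = 0" if "i \<in> {3..n-1}" "k \<in> {1..n}" for k i
  proof -
    have i: "i \<in> {1..n}" "i \<in> {2..n}" using that by auto
    have r: "rho i = i + 1" using that by (auto simp: rho_def)
    show ?thesis using exD(2)[OF E i(1) n1(1) that(2)] s3[OF i(2) that(2)] that r by (auto split: if_splits)
  qed
  have s4': "B k 3 = 0" if "k \<in> {1..n}" for k
    using exD(2)[OF E n1(1) n1(1) that] n by (auto simp: rho_def split: if_splits)
  have B0: "B r c = 0" if "r \<in> {1..n}" "c \<in> {1..n}" for r c
  proof -
    have "c = 1 \<or> c = 2 \<or> c = 3 \<or> c \<in> {4..n}" using that(2) by auto
    then consider "c = 1" | "c = 2" | "c = 3" | "c \<in> {4..n}" by blast
    then show ?thesis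
    proof cases
      case 1 then show ?thesis using c3[of r] s2[of 1] that by (cases "r = 1") auto
    next
      case 2
      have "r = 1 \<or> r = 2 \<or> r \<in> {3..n-1} \<or> r = n" using that(1) by auto
      then consider "r = 1" | "r = 2" | "r \<in> {3..n-1}" | "r = n" by blast
      then show ?thesis
      proof cases
        case 1 then show ?thesis using s2 2 that by auto
      next
        case 2 then show ?thesis using c4 \<open>c = 2\<close> by auto
      next
        case 3 then show ?thesis using s3b[of c r] \<open>c = 2\<close> n by auto
      next
        case 4 then show ?thesis using c4 \<open>c = 2\<close> by auto
      qed
    next
      case 3 then show ?thesis using s4' that by auto
    next
      case 4
      define i where "i = c - 1"
      have ci: "c = i + 1" "i \<in> {3..n-1}" using 4 by (auto simp: i_def)
      show ?thesis using s4[OF ci(2) that(1)] ci(1) by auto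
    qed
  qed
  have s5: "A k (rho i) = Lg n False A k i" if "i \<in> {1..n-1}" "i \<noteq> 2" "k \<in> {1..n}" for i k
  proof -
    have i: "i \<in> {1..n}" using that by auto
    show ?thesis using exD(1)[OF E i n1(1) that(3)] that c1 by (auto split: if_splits)
  qed
  have s6: "Lg n False A k i = 0" if "i = 2 \<or> i = n" "k \<in> {1..n}" for k i
  proof -
    have i: "i \<in> {1..n}" using that n by auto
    show ?thesis using exD(1)[OF E i n1(1) that(2)] that n by (auto split: if_splits)
  qed
  have s6a: "A a 2 = 0" "A a n = 0" if "a \<in> {3..n-1}" for a
    using s6[of 2 "a+1"] s6[of n "a+1"] that by (auto simp: Lg_def)
  have s7: "A 3 c = 0" if "c \<in> {3..n}" for c
  proof (cases "c = 3")
    case True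
    have "A 3 (rho 1) = Lg n False A 3 1" using s5[of 1 3] n by auto
    then show ?thesis using True c1 by (auto simp: rho_def Lg_def)
  next
    case False
    define i where "i = c - 1"
    have ci: "c = i + 1" "i \<in> {3..n-1}" using False that by (auto simp: i_def)
    have "A 3 (rho i) = Lg n False A 3 i" using s5[of i 3] ci n by auto
    moreover have "rho i = c" using ci by (auto simp: rho_def)
    ultimately show ?thesis using s1[of i] ci by (auto simp: Lg_def)
  qed
  have s8: "A (r+1) (c+1) = A r c" if "r \<in> {3..n-1}" "c \<in> {3..n-1}" for r c
  proof -
    have "A (r+1) (rho c) = Lg n False A (r+1) c" using s5[of c "r+1"] that by auto
    moreover have "rho c = c + 1" using that by (auto simp: rho_def)
    moreover have "Lg n False A (r+1) c = A r c" using that by (auto simp: Lg_def)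
    ultimately show ?thesis by simp
  qed
  have s8b: "A (r+1) 3 = A r 1" if "r \<in> {3..n-1}" for r
  proof -
    have "A (r+1) (rho 1) = Lg n False A (r+1) 1" using s5[of 1 "r+1"] that n by auto
    moreover have "Lg n False A (r+1) 1 = A r 1" using that by (auto simp: Lg_def)
    ultimately show ?thesis by (simp add: rho_def)
  qed
  have diag: "3 + d \<le> n \<longrightarrow> A (3 + d) (3 + d) = 0" for d
  proof (induction d)
    case 0 then show ?case using s7[of 3] n by auto
  next
    case (Suc d)
    show ?case
    proof
      assume d: "3 + Suc d \<le> n"
      have "A (3 + d + 1) (3 + d + 1) = A (3 + d) (3 + d)" using s8[of "3+d" "3+d"] d by auto
      then show "A (3 + Suc d) (3 + Suc d) = 0" using Suc.IH d by auto
    qed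
  qed
  have diag': "A r r = 0" if "r \<in> {3..n}" for r
    using diag[of "r - 3"] that by auto
  have Q: "d \<le> n - 3 \<longrightarrow> (\<forall>c\<in>{3..n}. A (n - d) c = 0)" for d
  proof (induction d)
    case 0
    show ?case
    proof (intro impI ballI)
      fix c assume c: "c \<in> {3..n}"
      show "A (n - 0) c = 0"
      proof (cases "c = n")
        case True then show ?thesis using diag'[of n] n by auto
      next
        case False then show ?thesis using c2[of c] c by auto
      qed
    qed
  next
    case (Suc d)
    show ?case
    proof (intro impI ballI)
      fix c assume d: "Suc d \<le> n - 3" and c: "c \<in> {3..n}"
      have r: "n - Suc d \<in> {3..n-1}" using d n by auto
      have r1: "n - Suc d + 1 = n - d" using d n by auto
      show "A (n - Suc d) c = 0"
      proof (cases "c = n")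
        case True then show ?thesis using s6a(2)[OF r] by auto
      next
        case False
        then have "c \<in> {3..n-1}" using c by auto
        then have "A (n - Suc d) c = A (n - d) (c + 1)" using s8[OF r] r1 by auto
        also have "\<dots> = 0" using Suc.IH d False c by auto
        finally show ?thesis .
      qed
    qed
  qed
  have Q': "A r c = 0" if "r \<in> {3..n}" "c \<in> {3..n}" for r c
    using Q[of "n - r"] that by auto
  have row2: "A 2 c = 0" if "c \<in> {3..n}" for c
  proof (cases "c = 3")
    case True
    have "A 2 (rho 1) = Lg n False A 2 1" using s5[of 1 2] n by auto
    then show ?thesis using True by (auto simp: rho_def Lg_def)
  next
    case False
    define i where "i = c - 1"
    have ci: "c = i + 1" "i \<in> {3..n-1}" using False that by (auto simp: i_def)
    have "A 2 (rho i) = Lg n False A 2 i" using s5[of i 2] ci n by auto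
    moreover have "rho i = c" using ci by (auto simp: rho_def)
    ultimately show ?thesis by (auto simp: Lg_def)
  qed
  have A0: "A r c = 0" if "r \<in> {1..n}" "c \<in> {1..n}" for r c
  proof -
    have "r = 1 \<or> r = 2 \<or> r \<in> {3..n-1} \<or> r = n" using that(1) by auto
    then consider "r = 1" | "r = 2" | "r \<in> {3..n-1}" | "r = n" by blast
    then show ?thesis
    proof cases
      case 1 then show ?thesis using s1 that by auto
    next
      case 2
      then show ?thesis using row2[of c] c1 that by (cases "c = 1 \<or> c = 2") auto
    next
      case 3
      have "c = 1 \<or> c = 2 \<or> c \<in> {3..n}" using that(2) by auto
      then show ?thesis
      proof (elim disjE)
        assume "c = 1" then show ?thesis using s8b[OF 3] Q'[of "r+1" 3] 3 by auto
      next
        assume "c = 2" then show ?thesis using s6a(1)[OF 3] by auto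
      next
        assume "c \<in> {3..n}" then show ?thesis using Q'[of r c] 3 by auto
      qed
    next
      case 4
      show ?thesis
      proof (cases "c = n")
        case True then show ?thesis using diag'[of n] n 4 by auto
      next
        case False then show ?thesis using c2[of c] 4 that by auto
      qed
    qed
  qed
  show ?thesis using A0 B0 by blast
qed



definition U :: "nat \<Rightarrow> nat \<Rightarrow> nat \<Rightarrow> nat \<Rightarrow> complex" where
  "U r c a b = (if a = r \<and> b = c then 1 else 0)"

definition Z :: "nat \<Rightarrow> nat \<Rightarrow> complex" where "Z a b = 0"

lemma exU1: assumes n: "3 \<le> n" and a: "a0 \<in> {2..n}" shows "ex n True Z (U a0 1)"
  unfolding ex_def Lg_def rho_def U_def Z_def using n a by auto

lemma exU2: assumes n: "3 \<le> n" shows "ex n True Z (U n 2)"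
  unfolding ex_def Lg_def rho_def U_def Z_def using n by auto

lemma exUn1: assumes n: "3 \<le> n" shows "ex n True (U n 1) Z"
  unfolding ex_def Lg_def rho_def U_def Z_def using n by auto


definition EL1 :: "nat \<Rightarrow> nat \<Rightarrow> complex" where
  "EL1 a b = (if (a = b \<and> 2 \<le> a) \<or> (a = 2 \<and> b = 1) then 1 else 0)"

definition EA1 :: "nat \<Rightarrow> nat \<Rightarrow> nat \<Rightarrow> complex" where
  "EA1 n a b = (if a = 1 \<and> b = 1 then 1 else if a = b \<and> 2 \<le> a then of_nat a - of_nat n
      else if a = 2 \<and> b = 1 then 1 - of_nat n else 0)"

definition ET1 :: "nat \<Rightarrow> nat \<Rightarrow> nat \<Rightarrow> nat \<Rightarrow> complex" where
  "ET1 n c a b = (if (2 \<le> b \<and> b < a \<and> a + c = n + b) \<or> (b = 1 \<and> 3 \<le> a \<and> a \<le> n - 1 \<and> a + c = n + 2) then 1 else 0)"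

lemma exEL1: assumes n: "3 \<le> n" shows "ex n True EL1 Z"
  unfolding ex_def Lg_def rho_def EL1_def Z_def using n by auto

lemma exET1: assumes n: "3 \<le> n" and c: "c \<in> {2..n-1}" shows "ex n True (ET1 n c) Z"
  unfolding ex_def Lg_def rho_def ET1_def Z_def using n c by auto

lemma exEA1: assumes n: "3 \<le> n" shows "ex n True (EA1 n) (U 1 1)"
  unfolding ex_def Lg_def rho_def EA1_def U_def using n by (auto simp: of_nat_Suc algebra_simps)


definition EA2 :: "nat \<Rightarrow> nat \<Rightarrow> complex" where
  "EA2 a b = (if a = 1 \<and> b = 1 then 1 else if a = b \<and> 3 \<le> a then of_nat a - 1 else 0)"

definition ET2 :: "nat \<Rightarrow> nat \<Rightarrow> nat \<Rightarrow> nat \<Rightarrow> complex" where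
  "ET2 n c a b = (if (3 \<le> b \<and> b < a \<and> a + c = n + b) \<or> (b = 1 \<and> 3 \<le> a \<and> a \<le> n - 1 \<and> a + c = n + 2) then 1 else 0)"

lemma exEA2: assumes n: "3 \<le> n" shows "ex n False EA2 (U 1 1)"
  unfolding ex_def Lg_def rho_def EA2_def U_def using n by (auto simp: of_nat_Suc algebra_simps)

lemma exET2: assumes n: "3 \<le> n" and c: "c \<in> {3..n-1}" shows "ex n False (ET2 n c) Z"
  unfolding ex_def Lg_def rho_def ET2_def Z_def using n c by auto

lemma exUA2a: assumes n: "3 \<le> n" shows "ex n False (U 2 1) Z"
  unfolding ex_def Lg_def rho_def U_def Z_def using n by auto
lemma exUA2b: assumes n: "3 \<le> n" shows "ex n False (U 2 2) Z"
  unfolding ex_def Lg_def rho_def U_def Z_def using n by auto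
lemma exUA2c: assumes n: "3 \<le> n" shows "ex n False (U n 2) Z"
  unfolding ex_def Lg_def rho_def U_def Z_def using n by auto
lemma exUA2d: assumes n: "3 \<le> n" shows "ex n False (U n 1) Z"
  unfolding ex_def Lg_def rho_def U_def Z_def using n by auto
lemma exUB2a: assumes n: "3 \<le> n" shows "ex n False Z (U 2 2)"
  unfolding ex_def Lg_def rho_def U_def Z_def using n by auto
lemma exUB2b: assumes n: "3 \<le> n" shows "ex n False Z (U n 2)"
  unfolding ex_def Lg_def rho_def U_def Z_def using n by auto
lemma exUB2c: assumes n: "3 \<le> n" and a: "a0 \<in> {2..n}" shows "ex n False Z (U a0 1)"
  unfolding ex_def Lg_def rho_def U_def Z_def using n a by auto



definition I1 :: "nat \<Rightarrow> (bool \<times> nat \<times> nat) set" where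
  "I1 n = {(False,1,1)} \<union> (\<lambda>c. (False,n,c)) ` {1..n} \<union> (\<lambda>a. (True,a,1)) ` {2..n} \<union> {(True,n,2)}"

definition Am1 :: "nat \<Rightarrow> bool \<times> nat \<times> nat \<Rightarrow> nat \<Rightarrow> nat \<Rightarrow> complex" where
  "Am1 n p = (case p of (s, r, c) \<Rightarrow> if s then Z else if r = 1 then EA1 n else if c = n then EL1
      else if c = 1 then U n 1 else ET1 n c)"

definition Bm1 :: "nat \<Rightarrow> bool \<times> nat \<times> nat \<Rightarrow> nat \<Rightarrow> nat \<Rightarrow> complex" where
  "Bm1 n p = (case p of (s, r, c) \<Rightarrow> if s then U r c else if r = 1 then U 1 1 else Z)"

lemma I1_cases: assumes "p \<in> I1 n"
  obtains "p = (False,1,1)" | c where "c \<in> {1..n}" "p = (False,n,c)" | a where "a \<in> {2..n}" "p = (True,a,1)"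
    | "p = (True,n,2)"
  using assms unfolding I1_def by blast

lemma ex_basis1: assumes n: "3 \<le> n" and p: "p \<in> I1 n" shows "ex n True (Am1 n p) (Bm1 n p)"
  using p
proof (cases rule: I1_cases)
  case 1 then show ?thesis using exEA1[OF n] by (simp add: Am1_def Bm1_def)
next
  case (2 c)
  consider "c = n" | "c = 1" | "c \<in> {2..n-1}" using 2 n by force
  then show ?thesis
  proof cases
    case 1 then show ?thesis using exEL1[OF n] 2 n by (simp add: Am1_def Bm1_def)
  next
    case 3 then show ?thesis using exET1[OF n 3] 2 n by (auto simp: Am1_def Bm1_def)
  next
    case 2 then show ?thesis using exUn1[OF n] \<open>p = (False, n, c)\<close> n by (auto simp: Am1_def Bm1_def)
  qed
next
  case (3 a) then show ?thesis using exU1[OF n 3(1)] by (simp add: Am1_def Bm1_def)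
next
  case 4 then show ?thesis using exU2[OF n] by (simp add: Am1_def Bm1_def)
qed

lemma I1_range: "p \<in> I1 n \<Longrightarrow> 3 \<le> n \<Longrightarrow> fst (snd p) \<in> {1..n} \<and> snd (snd p) \<in> {1..n}"
  unfolding I1_def by auto

lemma Am1_apply: "Am1 n p a b = (case p of (s, r, c) \<Rightarrow> if s then Z a b else if r = 1 then EA1 n a b
      else if c = n then EL1 a b else if c = 1 then U n 1 a b else ET1 n c a b)"
  by (simp add: Am1_def split: prod.splits)

lemma Bm1_apply: "Bm1 n p a b = (case p of (s, r, c) \<Rightarrow> if s then U r c a b else if r = 1 then U 1 1 a b else Z a b)"
  by (simp add: Bm1_def split: prod.splits)

lemma delta1: assumes n: "3 \<le> n" and p: "p \<in> I1 n" and q: "q \<in> I1 n"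
  shows "(if fst p then Bm1 n q else Am1 n q) (fst (snd p)) (snd (snd p)) = (if p = q then 1 else 0)"
  using p q n
  by (elim I1_cases) (auto simp: Am1_apply Bm1_apply EA1_def EL1_def ET1_def U_def Z_def)

lemma card_I1: assumes n: "3 \<le> n" shows "card (I1 n) = 2 * n + 1"
proof -
  have i1: "inj_on (\<lambda>c. (False,n,c)) {1..n}" "inj_on (\<lambda>a. (True,a,1::nat)) {2..n}" by (auto simp: inj_on_def)
  have c1: "card ((\<lambda>c. (False,n,c)) ` {1..n}) = n" using card_image[OF i1(1)] by simp
  have c2: "card ((\<lambda>a. (True,a,1::nat)) ` {2..n}) = n - 1" using card_image[OF i1(2)] by simp
  have "card ({(False,1,1)} \<union> (\<lambda>c. (False,n,c)) ` {1..n}) = 1 + n"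
    using n c1 by (subst card_Un_disjoint) auto
  moreover have "card ({(False,1,1)} \<union> (\<lambda>c. (False,n,c)) ` {1..n} \<union> (\<lambda>a. (True,a,1::nat)) ` {2..n}) = 1 + n + (n - 1)"
    using calculation c2 by (subst card_Un_disjoint) auto
  moreover have "card (I1 n) = 1 + n + (n - 1) + 1"
    unfolding I1_def using calculation by (subst card_Un_disjoint) auto
  ultimately show ?thesis using n by simp
qed

lemma dim1: assumes n: "3 \<le> n" shows "ps.dim (Bider n (cg n True)) = 2 * n + 1"
proof -
  have "ps.dim (Bider n (cg n True)) = card (I1 n)"
  proof (rule dim_by_coords[where phi = "\<lambda>p. (lm n (Am1 n p), lm n (Bm1 n p))" and coord = coordf])
    show "finite (I1 n)" unfolding I1_def by simp
    show "ps.subspace (Bider n (cg n True))" by (rule Bider_subspace)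
    show "coordf i (x + y) = coordf i x + coordf i y" for i x y by (rule coordf_add)
    show "coordf i (pscale a x) = a * coordf i x" for i a x by (rule coordf_scale)
  next
    fix p assume p: "p \<in> I1 n"
    show "(lm n (Am1 n p), lm n (Bm1 n p)) \<in> Bider n (cg n True)"
      using Bider_char eqs_ex[OF n] ex_basis1[OF n p] by blast
  next
    fix p q assume p: "p \<in> I1 n" and q: "q \<in> I1 n"
    obtain s r c where prc: "p = (s, r, c)" by (cases p) auto
    have rc: "r \<in> {1..n}" "c \<in> {1..n}" using I1_range[OF p n] prc by auto
    have "coordf p (lm n (Am1 n q), lm n (Bm1 n q)) = (if s then Bm1 n q else Am1 n q) r c"
      using prc coordf_lm[OF rc] by simp
    also have "\<dots> = (if p = q then 1 else 0)" using delta1[OF n p q] prc by simp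
    finally show "coordf p (lm n (Am1 n q), lm n (Bm1 n q)) = (if p = q then 1 else 0)" .
  next
    fix v assume v: "v \<in> Bider n (cg n True)" and z: "\<And>p. p \<in> I1 n \<Longrightarrow> coordf p v = 0"
    from v have "(fst v, snd v) \<in> Bider n (cg n True)" by simp
    then obtain A B where AB: "fst v = lm n A" "snd v = lm n B" and E: "eqs n (cg n True) A B"
      using Bider_char by blast
    have vAB: "v = (lm n A, lm n B)" using AB by (simp add: prod_eq_iff)
    have Ex: "ex n True A B" using E eqs_ex[OF n] by simp
    have co: "(if s then B r c else A r c) = 0" if "(s, r, c) \<in> I1 n" for s r c
    proof -
      have rc: "r \<in> {1..n}" "c \<in> {1..n}" using I1_range[OF that n] by auto
      show ?thesis using z[OF that] coordf_lm[OF rc] vAB by simp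
    qed
    have all: "\<forall>r\<in>{1..n}. \<forall>c\<in>{1..n}. A r c = 0 \<and> B r c = 0"
    proof (rule zero1[OF n Ex])
      show "A 1 1 = 0" using co[of False 1 1] by (simp add: I1_def)
      show "A n m = 0" if "m \<in> {1..n}" for m using co[of False n m] that by (simp add: I1_def)
      show "B a 1 = 0" if "a \<in> {2..n}" for a using co[of True a 1] that by (simp add: I1_def)
      show "B n 2 = 0" using co[of True n 2] by (simp add: I1_def)
    qed
    have "lm n A = 0" "lm n B = 0" using all by (auto intro!: lm_eq_zero)
    then show "v = 0" using vAB by (simp add: zero_prod_def)
  qed
  then show ?thesis using card_I1[OF n] by simp
qed



definition I2 :: "nat \<Rightarrow> (bool \<times> nat \<times> nat) set" where
  "I2 n = {(False,1,1), (False,2,1), (False,2,2)} \<union> (\<lambda>c. (False,n,c)) ` {1..n-1} \<union> (\<lambda>a. (True,a,1)) ` {2..n}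
     \<union> {(True,2,2), (True,n,2)}"

definition Am2 :: "nat \<Rightarrow> bool \<times> nat \<times> nat \<Rightarrow> nat \<Rightarrow> nat \<Rightarrow> complex" where
  "Am2 n p = (case p of (s, r, c) \<Rightarrow> if s then Z else if r = 1 then EA2 else if r = 2 then U 2 c
      else if c = 1 \<or> c = 2 then U n c else ET2 n c)"

definition Bm2 :: "nat \<Rightarrow> bool \<times> nat \<times> nat \<Rightarrow> nat \<Rightarrow> nat \<Rightarrow> complex" where
  "Bm2 n p = (case p of (s, r, c) \<Rightarrow> if s then U r c else if r = 1 then U 1 1 else Z)"

lemma Am2_apply: "Am2 n p a b = (case p of (s, r, c) \<Rightarrow> if s then Z a b else if r = 1 then EA2 a b
      else if r = 2 then U 2 c a b else if c = 1 \<or> c = 2 then U n c a b else ET2 n c a b)"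
  by (simp add: Am2_def split: prod.splits)

lemma Bm2_apply: "Bm2 n p a b = (case p of (s, r, c) \<Rightarrow> if s then U r c a b else if r = 1 then U 1 1 a b else Z a b)"
  by (simp add: Bm2_def split: prod.splits)

lemma I2_cases: assumes "p \<in> I2 n"
  obtains "p = (False,1,1)" | "p = (False,2,1)" | "p = (False,2,2)"
    | c where "c \<in> {1..n-1}" "p = (False,n,c)" | a where "a \<in> {2..n}" "p = (True,a,1)"
    | "p = (True,2,2)" | "p = (True,n,2)"
  using assms unfolding I2_def by blast

lemma ex_basis2: assumes n: "3 \<le> n" and p: "p \<in> I2 n" shows "ex n False (Am2 n p) (Bm2 n p)"
  using p
proof (cases rule: I2_cases)
  case 1 then show ?thesis using exEA2[OF n] by (simp add: Am2_def Bm2_def)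
next
  case 2 then show ?thesis using exUA2a[OF n] by (simp add: Am2_def Bm2_def)
next
  case 3 then show ?thesis using exUA2b[OF n] by (simp add: Am2_def Bm2_def)
next
  case (4 c)
  consider "c = 1" | "c = 2" | "c \<in> {3..n-1}" using 4 n by force
  then show ?thesis
  proof cases
    case 1 then show ?thesis using exUA2d[OF n] 4 n by (auto simp: Am2_def Bm2_def)
  next
    case 2 then show ?thesis using exUA2c[OF n] 4 n by (auto simp: Am2_def Bm2_def)
  next
    case 3 then show ?thesis using exET2[OF n 3] 4 n by (auto simp: Am2_def Bm2_def)
  qed
next
  case (5 a) then show ?thesis using exUB2c[OF n 5(1)] by (simp add: Am2_def Bm2_def)
next
  case 6 then show ?thesis using exUB2a[OF n] by (simp add: Am2_def Bm2_def)
next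
  case 7 then show ?thesis using exUB2b[OF n] by (simp add: Am2_def Bm2_def)
qed

lemma I2_range: "p \<in> I2 n \<Longrightarrow> 3 \<le> n \<Longrightarrow> fst (snd p) \<in> {1..n} \<and> snd (snd p) \<in> {1..n}"
  unfolding I2_def by auto

lemma delta2: assumes n: "3 \<le> n" and p: "p \<in> I2 n" and q: "q \<in> I2 n"
  shows "(if fst p then Bm2 n q else Am2 n q) (fst (snd p)) (snd (snd p)) = (if p = q then 1 else 0)"
  using p q n
  by (elim I2_cases) (auto simp: Am2_apply Bm2_apply EA2_def ET2_def U_def Z_def)

lemma card_I2: assumes n: "3 \<le> n" shows "card (I2 n) = 2 * n + 3"
proof -
  have i1: "inj_on (\<lambda>c. (False,n,c)) {1..n-1}" "inj_on (\<lambda>a. (True,a,1::nat)) {2..n}" by (auto simp: inj_on_def)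
  have c1: "card ((\<lambda>c. (False,n,c)) ` {1..n-1}) = n - 1" using card_image[OF i1(1)] by simp
  have c2: "card ((\<lambda>a. (True,a,1::nat)) ` {2..n}) = n - 1" using card_image[OF i1(2)] by simp
  have c0: "card {(False,1,1), (False,2,1), (False,2::nat,2::nat)} = 3" by simp
  have "card ({(False,1,1), (False,2,1), (False,2,2)} \<union> (\<lambda>c. (False,n,c)) ` {1..n-1}) = 3 + (n - 1)"
    using n c1 c0 by (subst card_Un_disjoint) auto
  moreover have "card ({(False,1,1), (False,2,1), (False,2,2)} \<union> (\<lambda>c. (False,n,c)) ` {1..n-1}
      \<union> (\<lambda>a. (True,a,1::nat)) ` {2..n}) = 3 + (n - 1) + (n - 1)"
    using calculation c2 by (subst card_Un_disjoint) auto
  moreover have "card {(True,2::nat,2::nat), (True,n,2)} = 2" using n by simp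
  moreover have "card (I2 n) = 3 + (n - 1) + (n - 1) + 2"
    unfolding I2_def using calculation n by (subst card_Un_disjoint) auto
  ultimately show ?thesis using n by simp
qed

lemma dim2: assumes n: "3 \<le> n" shows "ps.dim (Bider n (cg n False)) = 2 * n + 3"
proof -
  have "ps.dim (Bider n (cg n False)) = card (I2 n)"
  proof (rule dim_by_coords[where phi = "\<lambda>p. (lm n (Am2 n p), lm n (Bm2 n p))" and coord = coordf])
    show "finite (I2 n)" unfolding I2_def by simp
    show "ps.subspace (Bider n (cg n False))" by (rule Bider_subspace)
    show "coordf i (x + y) = coordf i x + coordf i y" for i x y by (rule coordf_add)
    show "coordf i (pscale a x) = a * coordf i x" for i a x by (rule coordf_scale)
  next
    fix p assume p: "p \<in> I2 n"
    show "(lm n (Am2 n p), lm n (Bm2 n p)) \<in> Bider n (cg n False)"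
      using Bider_char eqs_ex[OF n] ex_basis2[OF n p] by blast
  next
    fix p q assume p: "p \<in> I2 n" and q: "q \<in> I2 n"
    obtain s r c where prc: "p = (s, r, c)" by (cases p) auto
    have rc: "r \<in> {1..n}" "c \<in> {1..n}" using I2_range[OF p n] prc by auto
    have "coordf p (lm n (Am2 n q), lm n (Bm2 n q)) = (if s then Bm2 n q else Am2 n q) r c"
      using prc coordf_lm[OF rc] by simp
    also have "\<dots> = (if p = q then 1 else 0)" using delta2[OF n p q] prc by simp
    finally show "coordf p (lm n (Am2 n q), lm n (Bm2 n q)) = (if p = q then 1 else 0)" .
  next
    fix v assume v: "v \<in> Bider n (cg n False)" and z: "\<And>p. p \<in> I2 n \<Longrightarrow> coordf p v = 0"
    from v have "(fst v, snd v) \<in> Bider n (cg n False)" by simp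
    then obtain A B where AB: "fst v = lm n A" "snd v = lm n B" and E: "eqs n (cg n False) A B"
      using Bider_char by blast
    have vAB: "v = (lm n A, lm n B)" using AB by (simp add: prod_eq_iff)
    have Ex: "ex n False A B" using E eqs_ex[OF n] by simp
    have co: "(if s then B r c else A r c) = 0" if "(s, r, c) \<in> I2 n" for s r c
    proof -
      have rc: "r \<in> {1..n}" "c \<in> {1..n}" using I2_range[OF that n] by auto
      show ?thesis using z[OF that] coordf_lm[OF rc] vAB by simp
    qed
    have all: "\<forall>r\<in>{1..n}. \<forall>c\<in>{1..n}. A r c = 0 \<and> B r c = 0"
    proof (rule zero2[OF n Ex])
      show "A 1 1 = 0" using co[of False 1 1] by (simp add: I2_def)
      show "A 2 1 = 0" using co[of False 2 1] by (simp add: I2_def)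
      show "A 2 2 = 0" using co[of False 2 2] by (simp add: I2_def)
      show "A n m = 0" if "m \<in> {1..n-1}" for m using co[of False n m] that by (simp add: I2_def)
      show "B a 1 = 0" if "a \<in> {2..n}" for a using co[of True a 1] that by (simp add: I2_def)
      show "B n 2 = 0" using co[of True n 2] by (simp add: I2_def)
      show "B 2 2 = 0" using co[of True 2 2] by (simp add: I2_def)
    qed
    have "lm n A = 0" "lm n B = 0" using all by (auto intro!: lm_eq_zero)
    then show "v = 0" using vAB by (simp add: zero_prod_def)
  qed
  then show ?thesis using card_I2[OF n] by simp
qed


theorem mainTheorem6:
  fixes n :: nat
  assumes "n \<ge> 3"
  shows "cdim (Bider n (F1 n)) = 2 * n + 1 \<and> cdim (Bider n (F2 n)) = 2 * n + 3"
proof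
  show "cdim (Bider n (F1 n)) = 2 * n + 1"
    using dim1[OF assms] F1_cg[OF assms] by (simp add: cdim_def)
  show "cdim (Bider n (F2 n)) = 2 * n + 3"
    using dim2[OF assms] F2_cg[OF assms] by (simp add: cdim_def)
qed

end
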